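(* Let $K$ be an origin-symmetric convex body in $\mathbb{R}^2$ and let $\mu$ be a B-measure on $\partial K$. Then $\operatorname{supp}(\mu)\subseteq A(K)\setminus E(K)$.
   Context: For an origin-symmetric convex body $K\subset\mathbb{R}^2$ (compact convex set with non-empty interior, $K=-K$), let $\|x\|_K=\min\{\lambda>0: x\in\lambda K\}$ be the associated norm. For non-zero $x,y\in\mathbb{R}^2$, $x$ is Birkhoff orthogonal to $y$, written $x\dashv y$, if $\|x\|_K\le\|x+ty\|_K$ for all $t\in\mathbb{R}$. An angular measure on $\partial K$ is a Borel measure $\mu$ on $\partial K$ with $\mu(\partial K)=2\pi$, $\mu(X)=\mu(-X)$ for every Borel $X\subseteq\partial K$, and $\mu(\{x\})=0$ for every $x\in\partial K$. A B-measure is an angular measure $\mu$ such that $\mu(C)=\pi/2$ for every closed arc $C$ of $\partial K$ that contains no pair of opposite points $z,-z$ and whose endpoints $x,y$ satisfy $x\dashv y$. A point $x\in\partial K$ is an Auerbach point if there is $y\in\partial K$ with $x\dashv y$ and $y\dashv x$; $A(K)$ denotes the set of Auerbach points. $E(K)$ denotes the union of all relatively open non-degenerate line segments contained in $\partial K$. The support $\operatorname{supp}(\mu)$ is the set of all $x\in\partial K$ such that every relatively open subset of $\partial K$ containing $x$ has positive $\mu$-measure. *)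

theory Defs
  imports "HOL-Analysis.Analysis"
begin

type_synonym pt = "real^2"

definition convex_body :: "pt set \<Rightarrow> bool" where
  "convex_body K \<longleftrightarrow> compact K \<and> convex K \<and> interior K \<noteq> {}"

definition origin_symmetric :: "pt set \<Rightarrow> bool" where
  "origin_symmetric K \<longleftrightarrow> uminus ` K = K"

definition knorm :: "pt set \<Rightarrow> pt \<Rightarrow> real" where
  "knorm K x = Inf {l. l > 0 \<and> x \<in> (\<lambda>v. l *\<^sub>R v) ` K}"

definition birkhoff_orth :: "pt set \<Rightarrow> pt \<Rightarrow> pt \<Rightarrow> bool" where
  "birkhoff_orth K x y \<longleftrightarrow> x \<noteq> 0 \<and> y \<noteq> 0 \<and>
     (\<forall>t::real. knorm K x \<le> knorm K (x + t *\<^sub>R y))"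

definition angular_measure :: "pt set \<Rightarrow> pt measure \<Rightarrow> bool" where
  "angular_measure K M \<longleftrightarrow>
     sets M = sets (restrict_space borel (frontier K)) \<and>
     emeasure M (frontier K) = ennreal (2 * pi) \<and>
     (\<forall>X \<in> sets M. emeasure M X = emeasure M (uminus ` X)) \<and>
     (\<forall>x \<in> frontier K. emeasure M {x} = 0)"

text \<open>Closed arcs of the boundary are images of injective paths lying in the boundary.\<close>
definition B_measure :: "pt set \<Rightarrow> pt measure \<Rightarrow> bool" where
  "B_measure K M \<longleftrightarrow> angular_measure K M \<and>
     (\<forall>g. arc g \<and> path_image g \<subseteq> frontier K \<and>
          (\<forall>z \<in> path_image g. - z \<notin> path_image g) \<and>
          birkhoff_orth K (pathstart g) (pathfinish g)
        \<longrightarrow> emeasure M (path_image g) = ennreal (pi / 2))"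

definition auerbach_points :: "pt set \<Rightarrow> pt set" where
  "auerbach_points K = {x \<in> frontier K. \<exists>y \<in> frontier K.
      birkhoff_orth K x y \<and> birkhoff_orth K y x}"

definition E_set :: "pt set \<Rightarrow> pt set" where
  "E_set K = \<Union>{open_segment a b | a b. a \<noteq> b \<and> open_segment a b \<subseteq> frontier K}"

definition measure_support :: "pt set \<Rightarrow> pt measure \<Rightarrow> pt set" where
  "measure_support K M = {x \<in> frontier K. \<forall>U. openin (top_of_set (frontier K)) U \<and> x \<in> U
      \<longrightarrow> emeasure M U > 0}"

end

theory Submission imports Defs begin

locale kb =
  fixes K :: "(real^2) set"
  assumes cb: "convex_body K" and sym: "origin_symmetric K"
begin

lemma cpt: "compact K" and cvx: "convex K" and intne: "interior K \<noteq> {}"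
  using cb by (auto simp: convex_body_def)

lemma neg_in: "x \<in> K \<Longrightarrow> - x \<in> K"
  using sym unfolding origin_symmetric_def by (metis imageI)

lemma zero_int: "0 \<in> interior K"
proof -
  obtain z where z: "z \<in> interior K" using intne by blast
  have "- z \<in> interior K"
  proof -
    have "uminus ` interior K = interior (uminus ` K)"
      by (simp add: interior_negations)
    then show ?thesis using z sym unfolding origin_symmetric_def by (metis imageI)
  qed
  then have "(1/2) *\<^sub>R z + (1/2) *\<^sub>R (- z) \<in> interior K"
    using z by (intro convexD[OF convex_interior[OF cvx]]) auto
  then show ?thesis by simp
qed

lemma ex_r: "\<exists>r>0. cball 0 r \<subseteq> K"
proof -
  obtain e where "e > 0" "ball 0 e \<subseteq> K" using zero_int mem_interior by blast
  then show ?thesis by (intro exI[of _ "e/2"]) auto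
qed

lemma ex_R: "\<exists>R>0. K \<subseteq> cball 0 R"
proof -
  obtain B where "\<forall>x\<in>K. norm x \<le> B" using compact_imp_bounded[OF cpt] bounded_iff by blast
  then show ?thesis by (intro exI[of _ "max B 1"]) auto
qed

definition r0 where "r0 = (SOME r. r > 0 \<and> cball 0 r \<subseteq> K)"
definition R0 where "R0 = (SOME R. R > 0 \<and> K \<subseteq> cball 0 R)"
lemma r0: "r0 > 0" "cball 0 r0 \<subseteq> K"
  using someI_ex[OF ex_r] unfolding r0_def by auto
lemma R0: "R0 > 0" "K \<subseteq> cball 0 R0"
  using someI_ex[OF ex_R] unfolding R0_def by auto

lemma mem_scale: "l > 0 \<Longrightarrow> x \<in> (\<lambda>v. l *\<^sub>R v) ` K \<longleftrightarrow> (1/l) *\<^sub>R x \<in> K"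
proof
  assume "l > 0" "x \<in> (\<lambda>v. l *\<^sub>R v) ` K" then show "(1/l) *\<^sub>R x \<in> K" by auto
next
  assume "l > 0" "(1/l) *\<^sub>R x \<in> K"
  then show "x \<in> (\<lambda>v. l *\<^sub>R v) ` K" by (intro image_eqI[of _ _ "(1/l) *\<^sub>R x"]) auto
qed

lemma up_closed: assumes "0 < l" "l \<le> m" "(1/l) *\<^sub>R x \<in> K" shows "(1/m) *\<^sub>R x \<in> K"
proof -
  have "0 \<in> K" using zero_int interior_subset by blast
  have "(1/m) *\<^sub>R x = (l/m) *\<^sub>R ((1/l) *\<^sub>R x) + (1 - l/m) *\<^sub>R 0"
    using assms by simp
  also have "\<dots> \<in> K"
    using cvx assms \<open>0 \<in> K\<close> unfolding convex_def
    by (intro cvx[unfolded convex_def, rule_format]) (auto simp: field_simps)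
  finally show ?thesis .
qed

lemma S_ne: "\<exists>l. l > 0 \<and> (1/l) *\<^sub>R x \<in> K"
proof -
  define l where "l = (norm x + 1) / r0"
  have l: "l > 0" unfolding l_def using r0 by (intro divide_pos_pos) (auto simp: add_nonneg_pos)
  have "norm ((1/l) *\<^sub>R x) = norm x * r0 / (norm x + 1)"
    using r0 by (simp add: l_def)
  also have "\<dots> \<le> r0" using r0 by (simp add: divide_le_eq add_nonneg_pos)
  finally show ?thesis using l r0 by (intro exI[of _ l]) auto
qed

lemma knorm_eq: "knorm K x = Inf {l. l > 0 \<and> (1/l) *\<^sub>R x \<in> K}"
  unfolding knorm_def by (rule arg_cong[where f=Inf]) (auto simp: mem_scale)

lemma knorm_nonneg: "knorm K x \<ge> 0"
  unfolding knorm_eq using S_ne by (intro cInf_greatest) auto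

lemma knorm_le_iff: assumes "l > 0" shows "knorm K x \<le> l \<longleftrightarrow> (1/l) *\<^sub>R x \<in> K"
proof
  assume "(1/l) *\<^sub>R x \<in> K"
  then show "knorm K x \<le> l" unfolding knorm_eq using assms
    by (intro cInf_lower) (auto intro: bdd_belowI[of _ 0])
next
  assume le: "knorm K x \<le> l"
  have m: "(1/m) *\<^sub>R x \<in> K" if "m > l" for m
  proof -
    have "Inf {l. l > 0 \<and> (1/l) *\<^sub>R x \<in> K} < m" using le that unfolding knorm_eq by linarith
    then obtain s where "s \<in> {l. l > 0 \<and> (1/l) *\<^sub>R x \<in> K}" "s < m"
      using S_ne by (subst (asm) cInf_less_iff) (auto intro: bdd_belowI[of _ 0])
    then show ?thesis using up_closed[of s m x] by auto
  qed
  have lim: "(\<lambda>n. (1 / (l + inverse (real (Suc n)))) *\<^sub>R x) \<longlonglongrightarrow> (1/l) *\<^sub>R x"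
    using assms by (intro tendsto_intros LIMSEQ_inverse_real_of_nat_add) auto
  show "(1/l) *\<^sub>R x \<in> K"
    using closed_sequentially[OF compact_imp_closed[OF cpt] _ lim] m by (simp add: add_pos_pos)
qed

lemma eq_by_le: fixes a b :: real assumes "a \<ge> 0" "b \<ge> 0" "\<And>l. l > 0 \<Longrightarrow> a \<le> l \<longleftrightarrow> b \<le> l"
  shows "a = b"
proof (rule ccontr)
  assume "a \<noteq> b"
  then have "a < b \<or> b < a" by auto
  then show False
  proof
    assume "a < b" then show False using assms(3)[of "(a+b)/2"] assms(1,2) by auto
  next
    assume "b < a" then show False using assms(3)[of "(a+b)/2"] assms(1,2) by auto
  qed
qed

lemma knorm_K: "x \<in> K \<longleftrightarrow> knorm K x \<le> 1"
  using knorm_le_iff[of 1 x] by simp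

lemma knorm_zero[simp]: "knorm K 0 = 0"
proof -
  have "0 \<in> K" using zero_int interior_subset by blast
  then have "knorm K 0 \<le> 0 + e" if "e > 0" for e using knorm_le_iff[of e 0] that by simp
  then have "knorm K 0 \<le> 0" by (rule field_le_epsilon)
  then show ?thesis using knorm_nonneg[of 0] by simp
qed

lemma knorm_upper: "knorm K x \<le> norm x / r0"
proof (cases "x = 0")
  case True then show ?thesis by simp
next
  case False
  define l where "l = norm x / r0"
  have l: "l > 0" using False r0 by (simp add: l_def)
  have "norm ((1/l) *\<^sub>R x) = r0" using False r0 by (simp add: l_def)
  then have "(1/l) *\<^sub>R x \<in> K" using r0 by auto
  then show ?thesis using knorm_le_iff[OF l] by (simp add: l_def)
qed

lemma half_between: "(a::real) < b \<Longrightarrow> a < (a+b)/2 \<and> (a+b)/2 < b" by auto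

lemma knorm_lower: "norm x \<le> R0 * knorm K x"
proof (rule ccontr)
  assume a: "\<not> ?thesis"
  then have "knorm K x < norm x / R0" using R0 by (simp add: field_simps)
  define l where "l = (knorm K x + norm x / R0) / 2"
  have l1: "l > 0" using knorm_nonneg[of x] \<open>knorm K x < norm x / R0\<close> unfolding l_def by (smt (verit) half_gt_zero)
  have l2: "knorm K x \<le> l" using knorm_nonneg[of x] \<open>knorm K x < norm x / R0\<close> unfolding l_def using half_between[of "knorm K x" "norm x / R0"] by linarith
  have l3: "l < norm x / R0" using knorm_nonneg[of x] \<open>knorm K x < norm x / R0\<close> unfolding l_def using half_between[of "knorm K x" "norm x / R0"] by linarith
  note l = l1 l2 l3
  then have "(1/l) *\<^sub>R x \<in> K" using knorm_le_iff by blast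
  then have "norm x / l \<le> R0" using R0 l by auto
  then have "norm x \<le> R0 * l" using l by (simp add: divide_le_eq mult.commute)
  then show False using l R0 by (simp add: less_divide_eq mult.commute)
qed

lemma knorm_pos: "x \<noteq> 0 \<Longrightarrow> knorm K x > 0"
  using knorm_lower[of x] knorm_nonneg[of x] R0
  by (metis less_eq_real_def mult_zero_right norm_le_zero_iff)

lemma knorm_scale: assumes "c \<ge> 0" shows "knorm K (c *\<^sub>R x) = c * knorm K x"
proof (cases "c = 0")
  case True then show ?thesis by simp
next
  case False
  then have c: "c > 0" using assms by simp
  show ?thesis
  proof (rule eq_by_le)
    show "0 \<le> knorm K (c *\<^sub>R x)" "0 \<le> c * knorm K x" using knorm_nonneg c by auto
    fix l :: real assume l: "l > 0"
    have "knorm K (c *\<^sub>R x) \<le> l \<longleftrightarrow> (1/l) *\<^sub>R (c *\<^sub>R x) \<in> K" using knorm_le_iff[OF l] .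
    also have "(1/l) *\<^sub>R (c *\<^sub>R x) = (1/(l/c)) *\<^sub>R x" using c by simp
    also have "\<dots> \<in> K \<longleftrightarrow> knorm K x \<le> l/c" using knorm_le_iff[of "l/c" x] l c by simp
    also have "\<dots> \<longleftrightarrow> c * knorm K x \<le> l" using c by (simp add: le_divide_eq mult.commute)
    finally show "knorm K (c *\<^sub>R x) \<le> l \<longleftrightarrow> c * knorm K x \<le> l" .
  qed
qed

lemma knorm_neg[simp]: "knorm K (- x) = knorm K x"
proof -
  have "{l. l > 0 \<and> (1/l) *\<^sub>R (- x) \<in> K} = {l. l > 0 \<and> (1/l) *\<^sub>R x \<in> K}"
    apply (rule Collect_cong) using neg_in by (metis minus_minus scaleR_minus_right)
  then show ?thesis unfolding knorm_eq by simp
qed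

lemma knorm_triangle: "knorm K (x + y) \<le> knorm K x + knorm K y"
proof -
  have "knorm K (x + y) \<le> (knorm K x + knorm K y) + e" if e: "e > 0" for e
  proof -
    define a where "a = knorm K x + e/2"
    define b where "b = knorm K y + e/2"
    have ab: "a > 0" "b > 0" using knorm_nonneg[of x] knorm_nonneg[of y] e by (auto simp: a_def b_def)
    have "(1/a) *\<^sub>R x \<in> K" "(1/b) *\<^sub>R y \<in> K"
      using knorm_le_iff[OF ab(1), of x] knorm_le_iff[OF ab(2), of y] e by (auto simp: a_def b_def)
    then have "(a/(a+b)) *\<^sub>R ((1/a) *\<^sub>R x) + (b/(a+b)) *\<^sub>R ((1/b) *\<^sub>R y) \<in> K"
    proof -
      have "a/(a+b) + b/(a+b) = 1" using ab by (simp add: add_divide_distrib[symmetric])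
      then show ?thesis using ab \<open>(1/a) *\<^sub>R x \<in> K\<close> \<open>(1/b) *\<^sub>R y \<in> K\<close>
        by (intro convexD[OF cvx]) auto
    qed
    also have "(a/(a+b)) *\<^sub>R ((1/a) *\<^sub>R x) + (b/(a+b)) *\<^sub>R ((1/b) *\<^sub>R y) = (1/(a+b)) *\<^sub>R (x + y)"
    proof -
      have "(a/(a+b)) * (1/a) = 1/(a+b)" "(b/(a+b)) * (1/b) = 1/(a+b)" using ab by auto
      then show ?thesis by (simp add: scaleR_add_right)
    qed
    finally have "knorm K (x + y) \<le> a + b" using knorm_le_iff[of "a+b" "x+y"] ab by simp
    then show ?thesis by (simp add: a_def b_def)
  qed
  then show ?thesis by (rule field_le_epsilon)
qed

lemma knorm_lip: "\<bar>knorm K x - knorm K y\<bar> \<le> norm (x - y) / r0"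
proof -
  have "knorm K x \<le> knorm K y + knorm K (x - y)" using knorm_triangle[of y "x - y"] by simp
  moreover have "knorm K y \<le> knorm K x + knorm K (y - x)" using knorm_triangle[of x "y - x"] by simp
  moreover have "knorm K (y - x) = knorm K (x - y)" using knorm_neg[of "x - y"] by simp
  ultimately show ?thesis using knorm_upper[of "x - y"] by linarith
qed

lemma cont_knorm: "continuous_on UNIV (knorm K)"
proof (rule lipschitz_on_continuous_on)
  show "(1/r0)-lipschitz_on UNIV (knorm K)"
    unfolding lipschitz_on_def using r0 knorm_lip by (auto simp: dist_real_def dist_norm)
qed

lemma continuous_on_knorm[continuous_intros]:
  assumes "continuous_on S f" shows "continuous_on S (\<lambda>x. knorm K (f x))"
  using continuous_on_compose2[OF cont_knorm assms] by blast

lemma open_lt1: "open {x. knorm K x < 1}"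
  by (rule open_Collect_less[OF cont_knorm continuous_on_const])

lemma lt1_sub: "{x. knorm K x < 1} \<subseteq> K"
  using knorm_K by force

lemma lt1_int: "{x. knorm K x < 1} \<subseteq> interior K"
  by (rule interior_maximal[OF lt1_sub open_lt1])

lemma interior_knorm: "interior K = {x. knorm K x < 1}"
proof (rule subset_antisym[OF _ lt1_int])
  show "interior K \<subseteq> {x. knorm K x < 1}"
  proof
    fix x assume x: "x \<in> interior K"
    then obtain e where e: "e > 0" "ball x e \<subseteq> K" using mem_interior by blast
    show "x \<in> {x. knorm K x < 1}"
    proof (cases "x = 0")
      case True then show ?thesis by simp
    next
      case False
      define c where "c = 1 + e / (2 * norm x)"
      have c: "c > 1" using e False by (simp add: c_def)
      have "x - c *\<^sub>R x = (1 - c) *\<^sub>R x" by (simp add: algebra_simps)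
      then have "dist x (c *\<^sub>R x) = \<bar>1 - c\<bar> * norm x" by (simp add: dist_norm)
      also have "\<bar>1 - c\<bar> = c - 1" using c by simp
      finally have "dist x (c *\<^sub>R x) = (c - 1) * norm x" .
      also have "\<dots> = e/2" using False by (simp add: c_def)
      finally have "c *\<^sub>R x \<in> K" using e by auto
      then have "c * knorm K x \<le> 1" using knorm_K knorm_scale[of c x] c by simp
      moreover have "knorm K x > 0" using knorm_pos False by simp
      ultimately show ?thesis
      proof -
        have "knorm K x < 1" using \<open>c * knorm K x \<le> 1\<close> \<open>knorm K x > 0\<close> c
            mult_strict_right_mono[of 1 c "knorm K x"] by linarith
        then show ?thesis by simp
      qed
    qed
  qed
qed

lemma frontier_knorm: "frontier K = {x. knorm K x = 1}"
proof -
  have "frontier K = K - interior K"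
    using compact_imp_closed[OF cpt] by (simp add: frontier_def closure_closed)
  then show ?thesis using interior_knorm knorm_K by auto
qed

definition e :: "real \<Rightarrow> real^2" where "e t = cos t *\<^sub>R axis 1 1 + sin t *\<^sub>R axis 2 1"
definition p :: "real \<Rightarrow> real^2" where "p t = (1 / knorm K (e t)) *\<^sub>R e t"
definition det2 :: "real^2 \<Rightarrow> real^2 \<Rightarrow> real" where "det2 x y = x$1 * y$2 - x$2 * y$1"

lemma one_ne_two: "(1::2) \<noteq> 2" by simp

lemma e_comp[simp]: "e t $ 1 = cos t" "e t $ 2 = sin t"
  by (auto simp: e_def axis_def)

lemma norm2: "norm (w::real^2) = sqrt ((w$1)\<^sup>2 + (w$2)\<^sup>2)"
  by (simp add: norm_vec_def L2_set_def sum_2)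

lemma norm_e[simp]: "norm (e t) = 1"
  by (simp add: norm2)

lemma e_ne: "e t \<noteq> 0" using norm_e[of t] by (metis norm_zero zero_neq_one)

lemma cont_e[continuous_intros]: "continuous_on S e"
  unfolding e_def[abs_def] by (intro continuous_intros)

lemma kne_pos: "knorm K (e t) > 0" using knorm_pos[OF e_ne] .

lemma knorm_p: "knorm K (p t) = 1"
  using kne_pos[of t] by (simp add: p_def knorm_scale)

lemma p_front: "p t \<in> frontier K" using knorm_p frontier_knorm by auto

lemma p_ne: "p t \<noteq> 0" using knorm_p[of t] by auto

lemma cont_p[continuous_intros]: "continuous_on S p"
proof -
  have "continuous_on S (\<lambda>t. (1 / knorm K (e t)) *\<^sub>R e t)"
    using kne_pos by (intro continuous_intros) (auto simp: less_imp_neq[symmetric])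
  then show ?thesis unfolding p_def[abs_def] .
qed

lemma cont_p_comp[continuous_intros]: "continuous_on S f \<Longrightarrow> continuous_on S (\<lambda>x. p (f x))"
  using continuous_on_compose2[OF cont_p[of UNIV]] by blast

lemma e_pi: "e (t + pi) = - e t" by (simp add: e_def)
lemma p_pi: "p (t + pi) = - p t" by (simp add: p_def e_pi)
lemma p_mpi: "p (t - pi) = - p t" using p_pi[of "t - pi"] by (metis diff_add_cancel minus_minus)
lemma e_int: "e (t + 2 * pi * of_int n) = e t"
  using sin_cos_eq_iff[of "t + 2 * pi * of_int n" t] by (simp add: e_def)
lemma p_2pi: "p (t + 2 * pi) = p t" using e_int[of t 1] by (simp add: p_def)

lemma e_eq: "e s = e t \<Longrightarrow> \<exists>n::int. s = t + 2 * pi * n"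
  using sin_cos_eq_iff[of s t] by (metis e_comp)

lemma p_eq_e: assumes "p s = p t" shows "e s = e t"
proof -
  have "norm (p s) = 1 / knorm K (e s)" "norm (p t) = 1 / knorm K (e t)"
    using kne_pos[of s] kne_pos[of t] by (auto simp: p_def)
  then have "knorm K (e s) = knorm K (e t)" using assms by simp
  then show ?thesis using assms kne_pos[of s] unfolding p_def by simp
qed

lemma e_inj: assumes "e s = e t" "c \<le> s" "s < c + 2*pi" "c \<le> t" "t < c + 2*pi" shows "s = t"
proof -
  obtain n :: int where n: "s = t + 2 * pi * n" using e_eq[OF assms(1)] by blast
  have "\<bar>2 * pi * n\<bar> < 2 * pi" using assms n by auto
  then have "\<bar>real_of_int n\<bar> < 1" by (simp add: abs_mult)
  then have "n = 0" by linarith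
  then show ?thesis using n by simp
qed

lemma p_inj: "p s = p t \<Longrightarrow> c \<le> s \<Longrightarrow> s < c + 2*pi \<Longrightarrow> c \<le> t \<Longrightarrow> t < c + 2*pi \<Longrightarrow> s = t"
  using e_inj p_eq_e by blast

lemma angle_ex: assumes "w \<noteq> 0" shows "\<exists>th. w = norm w *\<^sub>R e th"
proof -
  have n: "norm w > 0" using assms by simp
  have nn: "(norm w)\<^sup>2 = (w$1)\<^sup>2 + (w$2)\<^sup>2" unfolding norm2 by simp
  have "(w$1 / norm w)\<^sup>2 + (w$2 / norm w)\<^sup>2 = ((w$1)\<^sup>2 + (w$2)\<^sup>2) / (norm w)\<^sup>2"
    by (simp add: power_divide add_divide_distrib)
  also have "\<dots> = 1" using n by (simp add: nn[symmetric])
  finally have "(w$1 / norm w)\<^sup>2 + (w$2 / norm w)\<^sup>2 = 1" .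
  then obtain t where t: "w$1 / norm w = cos t" "w$2 / norm w = sin t" by (metis sincos_total_2pi)
  have "w = norm w *\<^sub>R e t"
    unfolding vec_eq_iff forall_2 using t n by (auto simp: field_simps)
  then show ?thesis by blast
qed

lemma window: "\<exists>t'. c \<le> t' \<and> t' < c + 2*pi \<and> e t' = e t"
proof -
  define n where "n = \<lfloor>(t - c) / (2*pi)\<rfloor>"
  define t' where "t' = t + 2 * pi * of_int (- n)"
  have "of_int n \<le> (t - c) / (2*pi)" "(t - c) / (2*pi) < of_int n + 1"
    unfolding n_def by linarith+
  then have "2 * pi * of_int n \<le> t - c" "t - c < 2*pi*(of_int n + 1)"
    using pi_gt_zero by (simp_all add: field_simps)
  then have "c \<le> t'" "t' < c + 2*pi" unfolding t'_def by (auto simp: algebra_simps)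
  moreover have "e t' = e t" unfolding t'_def by (rule e_int)
  ultimately show ?thesis by blast
qed

lemma p_surj: assumes "w \<in> frontier K" shows "\<exists>t. c \<le> t \<and> t < c + 2*pi \<and> p t = w"
proof -
  have kw: "knorm K w = 1" using assms frontier_knorm by auto
  then have w0: "w \<noteq> 0" by auto
  obtain th where th: "w = norm w *\<^sub>R e th" using angle_ex[OF w0] by blast
  obtain t where t: "c \<le> t" "t < c + 2*pi" "e t = e th" using window by blast
  have "1 = norm w * knorm K (e th)" using kw th knorm_scale[of "norm w" "e th"] by simp
  then have "1 / knorm K (e th) = norm w" using kne_pos[of th] by (simp add: field_simps)
  then have "p th = w" using th by (simp add: p_def)
  then show ?thesis using t by (intro exI[of _ t]) (simp add: p_def)
qed

lemma det_p: "det2 (p s) (p t) = sin (t - s) / (knorm K (e s) * knorm K (e t))"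
  using kne_pos[of s] kne_pos[of t] by (simp add: det2_def p_def sin_diff field_simps)

lemma det_p_pos: "det2 (p s) (p t) > 0 \<longleftrightarrow> sin (t - s) > 0"
  using mult_pos_pos[OF kne_pos[of s] kne_pos[of t]] by (auto simp: det_p zero_less_divide_iff)
lemma det_p_neg: "det2 (p s) (p t) < 0 \<longleftrightarrow> sin (t - s) < 0"
  using mult_pos_pos[OF kne_pos[of s] kne_pos[of t]] by (auto simp: det_p divide_less_0_iff)

lemma det_lin: "det2 x (y + c *\<^sub>R z) = det2 x y + c * det2 x z"
  "det2 (y + c *\<^sub>R z) x = det2 y x + c * det2 z x"
  "det2 x x = 0" "det2 x (c *\<^sub>R y) = c * det2 x y"
  by (simp_all add: det2_def algebra_simps)

lemma det_zero_par: assumes "x \<noteq> 0" "det2 x d = 0" shows "\<exists>k. d = k *\<^sub>R x"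
proof (cases "x$1 = 0")
  case True
  then have "x$2 \<noteq> 0" using assms(1) by (metis exhaust_2 vec_eq_iff zero_index)
  then show ?thesis using assms True
    by (intro exI[of _ "d$2 / x$2"]) (auto simp: vec_eq_iff forall_2 det2_def)
next
  case False
  then show ?thesis using assms
    by (intro exI[of _ "d$1 / x$1"]) (auto simp: vec_eq_iff forall_2 det2_def field_simps)
qed

lemma bo_p: "birkhoff_orth K (p s) y \<longleftrightarrow> y \<noteq> 0 \<and> (\<forall>t. 1 \<le> knorm K (p s + t *\<^sub>R y))"
  unfolding birkhoff_orth_def using knorm_p p_ne by simp

lemma bo_scale: "birkhoff_orth K x y \<Longrightarrow> c \<noteq> 0 \<Longrightarrow> birkhoff_orth K x (c *\<^sub>R y)"
proof -
  assume a: "birkhoff_orth K x y" "c \<noteq> 0"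
  have "knorm K x \<le> knorm K (x + t *\<^sub>R (c *\<^sub>R y))" for t
    using a(1) unfolding birkhoff_orth_def scaleR_scaleR by blast
  moreover have "y \<noteq> 0" "x \<noteq> 0" using a(1) unfolding birkhoff_orth_def by auto
  ultimately show ?thesis unfolding birkhoff_orth_def using a(2) by simp
qed

lemma bo_self: "\<not> birkhoff_orth K x (c *\<^sub>R x)"
proof
  assume a: "birkhoff_orth K x (c *\<^sub>R x)"
  then have "c \<noteq> 0" "x \<noteq> 0" unfolding birkhoff_orth_def by auto
  then have "knorm K x \<le> knorm K (x + (- 1 / c) *\<^sub>R (c *\<^sub>R x))" using a unfolding birkhoff_orth_def by blast
  then show False using knorm_pos[OF \<open>x \<noteq> 0\<close>] \<open>c \<noteq> 0\<close> by simp
qed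

lemma bo_pp: "\<not> birkhoff_orth K (p s) (p s)" "\<not> birkhoff_orth K (p s) (- p s)"
  using bo_self[of "p s" 1] bo_self[of "p s" "-1"] by auto

definition A :: "real \<Rightarrow> real \<Rightarrow> (real^2) set" where "A s t = p ` {s..t}"

lemma A_compact: "compact (A s t)"
  unfolding A_def by (intro compact_continuous_image cont_p compact_Icc)

lemma A_closed: "closed (A s t)" using A_compact compact_imp_closed by blast

lemma A_sub: "A s t \<subseteq> frontier K" unfolding A_def using p_front by auto

lemma A_shift: "A (s + pi) (t + pi) = uminus ` A s t"
proof -
  have e1: "{s + pi..t + pi} = (\<lambda>x. x + pi) ` {s..t}" by simp
  have "A (s + pi) (t + pi) = p ` ((\<lambda>x. x + pi) ` {s..t})" unfolding A_def e1 ..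
  also have "\<dots> = (\<lambda>x. p (x + pi)) ` {s..t}" by (rule image_image)
  finally have "A (s + pi) (t + pi) = (\<lambda>x. p (x + pi)) ` {s..t}" .
  also have "\<dots> = uminus ` A s t" unfolding A_def p_pi by (simp add: image_image)
  finally show ?thesis .
qed

lemma arc_ok:
  assumes st: "s < t" "t < s + pi"
  shows "\<exists>g. arc g \<and> path_image g = A s t \<and> pathstart g = p s \<and> pathfinish g = p t \<and>
      (\<forall>z \<in> path_image g. - z \<notin> path_image g)"
proof -
  define h where "h u = (t - s) * u + s" for u :: real
  define g where "g = p \<circ> h"
  have himg: "h ` {0..1} = {s..t}"
    using st unfolding h_def by (simp add: image_affinity_atLeastAtMost)
  have cg: "continuous_on {0..1} g" unfolding g_def h_def by (intro continuous_intros)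
  have inj: "inj_on g {0..1}"
  proof
    fix u v :: real assume uv: "u \<in> {0..1}" "v \<in> {0..1}" "g u = g v"
    then have "h u \<in> {s..t}" "h v \<in> {s..t}" using himg by auto
    then have "h u = h v" using uv(3) p_inj[of "h u" "h v" s] st unfolding g_def by auto
    then show "u = v" using st unfolding h_def by simp
  qed
  have pim: "path_image g = A s t" unfolding path_image_def A_def g_def image_comp[symmetric] himg ..
  have ps: "pathstart g = p s" "pathfinish g = p t" unfolding pathstart_def pathfinish_def g_def h_def by auto
  have opp: "- z \<notin> path_image g" if hz: "z \<in> path_image g" for z
  proof
    assume hz2: "- z \<in> path_image g"
    obtain a where a: "a \<in> {s..t}" "z = p a" using hz pim unfolding A_def by auto
    obtain b where b: "b \<in> {s..t}" "- z = p b" using hz2 pim unfolding A_def by auto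
    note ab = a(1) b(1) a(2) b(2)
    have "p a = p (b + pi)" using p_pi[of b] ab(3,4) by (metis minus_minus)
    then have "a = b + pi" using ab st by (intro p_inj[of a "b + pi" s]) auto
    then show False using ab st by auto
  qed
  show ?thesis
    by (intro exI[of _ g]) (use cg inj pim ps opp in \<open>auto simp: arc_def path_def\<close>)
qed

lemma A_union: "s \<le> t \<Longrightarrow> t \<le> u \<Longrightarrow> A s u = A s t \<union> A t u"
  unfolding A_def by (auto simp flip: image_Un)

lemma A_int: assumes "s \<le> t" "t \<le> u" "u < s + 2*pi" shows "A s t \<inter> A t u \<subseteq> {p t}"
proof
  fix z assume "z \<in> A s t \<inter> A t u"
  then obtain a b where ab: "a \<in> {s..t}" "b \<in> {t..u}" "z = p a" "z = p b" unfolding A_def by auto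
  then have "a = b" using assms by (intro p_inj[of a b s]) auto
  then show "z \<in> {p t}" using ab by auto
qed

lemma A_half_union: "frontier K = A s (s + pi) \<union> A (s + pi) (s + 2*pi)"
proof
  show "A s (s + pi) \<union> A (s + pi) (s + 2*pi) \<subseteq> frontier K" using A_sub by auto
next
  show "frontier K \<subseteq> A s (s + pi) \<union> A (s + pi) (s + 2*pi)"
  proof
    fix w assume "w \<in> frontier K"
    then obtain t where t: "s \<le> t" "t < s + 2*pi" "p t = w" using p_surj by blast
    then show "w \<in> A s (s + pi) \<union> A (s + pi) (s + 2*pi)" unfolding A_def
      by (cases "t \<le> s + pi") auto
  qed
qed

lemma A_half_int: "A s (s + pi) \<inter> A (s + pi) (s + 2*pi) \<subseteq> {p s, p (s + pi)}"
proof
  fix z assume "z \<in> A s (s + pi) \<inter> A (s + pi) (s + 2*pi)"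
  then obtain a b where ab: "a \<in> {s..s+pi}" "b \<in> {s+pi..s+2*pi}" "z = p a" "z = p b" unfolding A_def by auto
  show "z \<in> {p s, p (s + pi)}"
  proof (cases "b = s + 2*pi")
    case True then show ?thesis using ab p_2pi[of s] by auto
  next
    case False
    then have "a = b" using ab by (intro p_inj[of a b s]) auto
    then show ?thesis using ab by auto
  qed
qed

end

locale bm = kb +
  fixes M :: "(real^2) measure"
  assumes bmeas: "B_measure K M"
begin

lemma ang: "angular_measure K M" using bmeas unfolding B_measure_def by auto

lemma sets_M: "sets M = sets (restrict_space borel (frontier K))"
  using ang unfolding angular_measure_def by auto

lemma space_M: "space M = frontier K"
  using sets_eq_imp_space_eq[OF sets_M] by (simp add: space_restrict_space)

lemma closed_sets: assumes "closed C" "C \<subseteq> frontier K" shows "C \<in> sets M"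
proof -
  have "C = frontier K \<inter> C" using assms by auto
  then show ?thesis unfolding sets_M sets_restrict_space using borel_closed[OF assms(1)] by blast
qed

lemma em_front: "emeasure M (frontier K) = ennreal (2 * pi)"
  using ang unfolding angular_measure_def by auto

sublocale finite_measure M
  by (rule finite_measureI) (simp add: space_M em_front)

lemma A_sets: "A s t \<in> sets M" using closed_sets[OF A_closed A_sub] .

lemma pt_sets: "x \<in> frontier K \<Longrightarrow> {x} \<in> sets M" using closed_sets[of "{x}"] by auto

lemma mpt: "x \<in> frontier K \<Longrightarrow> measure M {x} = 0"
  using ang unfolding angular_measure_def measure_def by auto

lemma msym: "X \<in> sets M \<Longrightarrow> measure M (uminus ` X) = measure M X"
  using ang unfolding angular_measure_def measure_def by auto

lemma mfront: "measure M (frontier K) = 2 * pi"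
  using em_front unfolding measure_def by simp

lemma mB: assumes "s < t" "t < s + pi" "birkhoff_orth K (p s) (p t)"
  shows "measure M (A s t) = pi / 2"
proof -
  obtain g where g: "arc g" "path_image g = A s t" "pathstart g = p s" "pathfinish g = p t"
      "\<forall>z \<in> path_image g. - z \<notin> path_image g"
    using arc_ok[OF assms(1,2)] by blast
  have "emeasure M (path_image g) = ennreal (pi / 2)"
  proof -
    have "\<forall>g. arc g \<and> path_image g \<subseteq> frontier K \<and>
          (\<forall>z \<in> path_image g. - z \<notin> path_image g) \<and>
          birkhoff_orth K (pathstart g) (pathfinish g)
        \<longrightarrow> emeasure M (path_image g) = ennreal (pi / 2)" using bmeas unfolding B_measure_def by blast
    then show ?thesis using g assms(3) A_sub[of s t] by metis
  qed
  then show ?thesis using g(2) unfolding measure_def by simp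
qed

lemma mnull: assumes "X \<subseteq> {x}" "x \<in> frontier K" shows "measure M X = 0"
  using finite_measure_mono[OF assms(1) pt_sets[OF assms(2)]] mpt[OF assms(2)] measure_nonneg[of M X]
  by linarith

lemma madd: assumes "s \<le> t" "t \<le> u" "u < s + 2*pi"
  shows "measure M (A s u) = measure M (A s t) + measure M (A t u)"
proof -
  have "measure M (A s u) = measure M (A s t) + measure M (A t u) - measure M (A s t \<inter> A t u)"
    unfolding A_union[OF assms(1,2)] by (rule measure_Un3) (simp_all add: fmeasurable_eq_sets A_sets)
  moreover have "measure M (A s t \<inter> A t u) = 0" using mnull[OF A_int[OF assms] p_front] .
  ultimately show ?thesis by simp
qed

lemma mhalf: "measure M (A s (s + pi)) = pi"
proof -
  have sh: "A (s + pi) (s + 2*pi) = uminus ` A s (s + pi)"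
  proof -
    have "s + 2*pi = (s + pi) + pi" by simp
    then show ?thesis using A_shift[of s "s + pi"] by (simp only:)
  qed
  have "measure M (frontier K) = measure M (A s (s + pi)) + measure M (A (s + pi) (s + 2*pi))
      - measure M (A s (s + pi) \<inter> A (s + pi) (s + 2*pi))"
    by (subst A_half_union[of s]) (rule measure_Un3, simp_all add: fmeasurable_eq_sets A_sets)
  then have "2 * pi = measure M (A s (s + pi)) + measure M (A (s + pi) (s + 2*pi))
      - measure M (A s (s + pi) \<inter> A (s + pi) (s + 2*pi))" using mfront by simp
  moreover have "measure M (A (s + pi) (s + 2*pi)) = measure M (A s (s + pi))"
    unfolding sh by (rule msym[OF A_sets])
  moreover have "measure M (A s (s + pi) \<inter> A (s + pi) (s + 2*pi)) = 0"
  proof -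
    have "measure M (A s (s + pi) \<inter> A (s + pi) (s + 2*pi)) \<le> measure M ({p s} \<union> {p (s + pi)})"
    proof (rule finite_measure_mono)
      show "{p s} \<union> {p (s + pi)} \<in> sets M" using pt_sets p_front by (intro sets.Un) auto
    qed (use A_half_int[of s] in auto)
    also have "\<dots> \<le> measure M {p s} + measure M {p (s + pi)}"
      by (intro measure_subadditive) (auto intro: pt_sets p_front simp: emeasure_eq_measure)
    also have "\<dots> = 0" using mpt p_front by simp
    finally show ?thesis using measure_nonneg[of M] by (simp add: order_antisym)
  qed
  ultimately show ?thesis by simp
qed

lemma mshift: "measure M (A (s + pi) (t + pi)) = measure M (A s t)"
  unfolding A_shift by (rule msym[OF A_sets])

lemma nbhd: assumes "a1 < a" "a < a2" "a2 < a1 + 2*pi" "measure M (A a1 a2) = 0"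
  shows "p a \<notin> measure_support K M"
proof
  assume sup: "p a \<in> measure_support K M"
  define C where "C = A a2 (a1 + 2*pi)"
  define U where "U = p ` {a1<..<a2}"
  have UC: "U = frontier K \<inter> (- C)"
  proof
    show "U \<subseteq> frontier K \<inter> - C"
    proof
      fix w assume "w \<in> U"
      then obtain u where u: "a1 < u" "u < a2" "w = p u" unfolding U_def by auto
      have "w \<notin> C"
      proof
        assume "w \<in> C"
        then obtain v where v: "a2 \<le> v" "v \<le> a1 + 2*pi" "w = p v" unfolding C_def A_def by auto
        show False
        proof (cases "v = a1 + 2*pi")
          case True
          then have "p u = p a1" using u v p_2pi[of a1] by simp
          then have "u = a1" using u assms by (intro p_inj[of u a1 a1]) auto
          then show False using u by simp
        next
          case False
          then have "u = v" using u v assms by (intro p_inj[of u v a1]) auto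
          then show False using u v by simp
        qed
      qed
      then show "w \<in> frontier K \<inter> - C" using u p_front by auto
    qed
  next
    show "frontier K \<inter> - C \<subseteq> U"
    proof
      fix w assume w: "w \<in> frontier K \<inter> - C"
      then obtain t where t: "a1 \<le> t" "t < a1 + 2*pi" "p t = w" using p_surj by blast
      have "t \<noteq> a1"
      proof
        assume "t = a1"
        then have "w = p (a1 + 2*pi)" using t p_2pi by simp
        then have "w \<in> C" unfolding C_def A_def using assms by auto
        then show False using w by auto
      qed
      moreover have "\<not> a2 \<le> t"
      proof
        assume "a2 \<le> t"
        then have "w \<in> C" unfolding C_def A_def using t by auto
        then show False using w by auto
      qed
      ultimately show "w \<in> U" unfolding U_def using t by auto
    qed
  qed
  have op: "openin (top_of_set (frontier K)) U"
    unfolding UC using A_closed unfolding C_def by (intro openin_open_Int) auto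
  have "p a \<in> U" unfolding U_def using assms by auto
  then have pos: "emeasure M U > 0" using sup op unfolding measure_support_def by auto
  have "U \<subseteq> A a1 a2" unfolding U_def A_def by auto
  then have "emeasure M U \<le> emeasure M (A a1 a2)" by (intro emeasure_mono A_sets)
  also have "\<dots> = 0" using assms(4) by (simp add: emeasure_eq_measure)
  finally show False using pos by simp
qed

lemma sinpos: fixes y :: real assumes "- pi \<le> y" "y < pi" "sin y > 0" shows "0 < y" "y < pi"
proof -
  show "0 < y"
  proof (rule ccontr)
    assume "\<not> 0 < y"
    then have "sin (- y) \<ge> 0" using assms by (intro sin_ge_zero) auto
    then show False using assms by simp
  qed
qed (use assms in auto)

lemma sinneg: fixes y :: real assumes "- pi \<le> y" "y < pi" "sin y < 0" shows "- pi < y" "y < 0"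
proof -
  show "y < 0"
  proof (rule ccontr)
    assume "\<not> y < 0"
    then have "sin y \<ge> 0" using assms by (intro sin_ge_zero) auto
    then show False using assms by simp
  qed
  show "- pi < y"
  proof (rule ccontr)
    assume "\<not> - pi < y"
    then have "y = - pi" using assms by simp
    then show False using assms by simp
  qed
qed

lemma sinpos2: fixes y :: real assumes "0 < y" "y < 2*pi" "sin y > 0" shows "y < pi"
proof (rule ccontr)
  assume "\<not> y < pi"
  then have "sin y \<le> 0" using assms by (intro sin_le_zero) auto
  then show False using assms by simp
qed

lemma front_not_int: "z \<in> frontier K \<Longrightarrow> z \<notin> interior K"
  by (simp add: frontier_def)

lemma seg_orth:
  assumes z: "z \<in> open_segment u v" and sub: "open_segment u v \<subseteq> frontier K"
  shows "birkhoff_orth K z (v - u)"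
proof -
  define d where "d = v - u"
  obtain m where m: "0 < m" "m < 1" "z = (1 - m) *\<^sub>R u + m *\<^sub>R v" and uv: "u \<noteq> v"
    using z unfolding in_segment by blast
  have d0: "d \<noteq> 0" using uv by (simp add: d_def)
  have zf: "z \<in> frontier K" using z sub by auto
  then have kz: "knorm K z = 1" using frontier_knorm by auto
  have "1 \<le> knorm K (z + t *\<^sub>R d)" for t
  proof (rule ccontr)
    assume "\<not> 1 \<le> knorm K (z + t *\<^sub>R d)"
    then have qi: "z + t *\<^sub>R d \<in> interior K" using interior_knorm by auto
    have t0: "t \<noteq> 0" using qi zf front_not_int by auto
    obtain tau where tau: "t * tau > 0" "0 < m - tau" "m - tau < 1"
    proof (cases "t > 0")
      case True then show ?thesis using m by (intro that[of "m/2"]) auto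
    next
      case False then have "t < 0" using t0 by simp
      then show ?thesis using m by (intro that[of "- (1 - m)/2"]) (auto simp: mult_neg_neg field_simps)
    qed
    have sgn: "(0 < t \<and> 0 < tau) \<or> (t < 0 \<and> tau < 0)" using tau(1) by (auto simp: zero_less_mult_iff)
    then have tt: "t + tau \<noteq> 0" by auto
    define al where "al = t / (t + tau)"
    have al: "0 < al" "al < 1" using sgn unfolding al_def by (auto simp: divide_simps)
    define z' where "z' = z - tau *\<^sub>R d"
    have z'seg: "z' \<in> open_segment u v"
      unfolding in_segment using uv tau
      by (intro conjI exI[of _ "m - tau"]) (auto simp: z'_def m(3) d_def algebra_simps)
    then have "z' \<in> closure K" using sub by (auto simp: frontier_def)
    then have osub: "open_segment (z + t *\<^sub>R d) z' \<subseteq> interior K"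
      by (rule in_interior_closure_convex_segment[OF cvx qi])
    have coef: "(1 - al) * t - al * tau = 0" using tt unfolding al_def by (simp add: field_simps)
    have "(1 - al) *\<^sub>R (z + t *\<^sub>R d) + al *\<^sub>R z' = z + ((1 - al) * t - al * tau) *\<^sub>R d"
      unfolding z'_def by (simp add: algebra_simps)
    then have zeq: "z = (1 - al) *\<^sub>R (z + t *\<^sub>R d) + al *\<^sub>R z'" using coef by simp
    have "z + t *\<^sub>R d \<noteq> z'"
    proof
      assume "z + t *\<^sub>R d = z'"
      then have "(t + tau) *\<^sub>R d = 0" unfolding z'_def by (simp add: algebra_simps)
      then show False using tt d0 by simp
    qed
    then have "z \<in> open_segment (z + t *\<^sub>R d) z'"
      unfolding in_segment using al zeq by blast
    then show False using osub zf front_not_int by auto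
  qed
  then show ?thesis unfolding birkhoff_orth_def d_def using kz d0 zf uv by (auto simp: d_def)
qed

lemma orth_dir:
  assumes "birkhoff_orth K (p a) d"
  shows "\<exists>b c. a < b \<and> b < a + pi \<and> c \<noteq> 0 \<and> p b = c *\<^sub>R d"
proof -
  have d0: "d \<noteq> 0" using assms unfolding birkhoff_orth_def by auto
  define k where "k = knorm K d"
  have k: "k > 0" using knorm_pos[OF d0] by (simp add: k_def)
  define q where "q = (1/k) *\<^sub>R d"
  have "knorm K q = 1" using k unfolding q_def k_def by (simp add: knorm_scale)
  then have "q \<in> frontier K" using frontier_knorm by auto
  then obtain b0 where b0: "a \<le> b0" "b0 < a + 2*pi" "p b0 = q" using p_surj by blast
  have "b0 \<noteq> a"
  proof
    assume "b0 = a"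
    then have "d = k *\<^sub>R p a" using b0 k unfolding q_def by auto
    then show False using assms bo_self by metis
  qed
  moreover have "b0 \<noteq> a + pi"
  proof
    assume "b0 = a + pi"
    then have e1: "(1/k) *\<^sub>R d = - p a" using b0 p_pi[of a] unfolding q_def by auto
    have "d = k *\<^sub>R ((1/k) *\<^sub>R d)" using k by simp
    also have "\<dots> = (- k) *\<^sub>R p a" unfolding e1 by simp
    finally have "d = (- k) *\<^sub>R p a" .
    then show False using assms bo_self by metis
  qed
  ultimately consider "a < b0" "b0 < a + pi" | "a + pi < b0" "b0 < a + 2*pi" using b0 by linarith
  then show ?thesis
  proof cases
    case 1 then show ?thesis using b0 k unfolding q_def by (intro exI[of _ b0] exI[of _ "1/k"]) auto
  next
    case 2
    have "p (b0 - pi) = (- (1/k)) *\<^sub>R d" using p_mpi[of b0] b0 unfolding q_def by simp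
    then show ?thesis using 2 k by (intro exI[of _ "b0 - pi"] exI[of _ "- (1/k)"]) auto
  qed
qed

lemma not_E: assumes sup: "x \<in> measure_support K M" shows "x \<notin> E_set K"
proof
  assume "x \<in> E_set K"
  then obtain u v where uv: "u \<noteq> v" "open_segment u v \<subseteq> frontier K" "x \<in> open_segment u v"
    unfolding E_set_def by blast
  have xf: "x \<in> frontier K" using sup unfolding measure_support_def by auto
  then obtain a where a: "p a = x" using p_surj[of x 0] by blast
  define d where "d = v - u"
  obtain m where m: "0 < m" "m < 1" "x = (1 - m) *\<^sub>R u + m *\<^sub>R v"
    using uv(3) unfolding in_segment by blast
  define del where "del = min m (1 - m) / 2"
  have del: "0 < del" "del < m" "del < 1 - m" using m by (auto simp: del_def)
  have zseg: "x + sg *\<^sub>R d \<in> open_segment u v" if "\<bar>sg\<bar> \<le> del" for sg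
    unfolding in_segment using uv(1) that del
    by (intro conjI exI[of _ "m + sg"]) (auto simp: m(3) d_def algebra_simps)
  have xo: "birkhoff_orth K (p a) d" using seg_orth[OF uv(3,2)] a by (simp add: d_def)
  define D where "D = det2 x d"
  have D0: "D \<noteq> 0"
  proof
    assume "D = 0"
    then obtain k where "d = k *\<^sub>R x" using det_zero_par[of x d] xf frontier_knorm D_def by force
    then show False using xo a bo_self by metis
  qed
  obtain b c where bc: "a < b" "b < a + pi" "c \<noteq> 0" "p b = c *\<^sub>R d" using orth_dir[OF xo] by blast
  define sg where "sg = (if D > 0 then del else - del)"
  have sgD: "sg * D > 0" using D0 del mult_pos_neg[of del D] by (auto simp: sg_def mult_neg_neg)
  have sga: "\<bar>sg\<bar> \<le> del" "\<bar>- sg\<bar> \<le> del" using del by (auto simp: sg_def)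
  define zp where "zp = x + sg *\<^sub>R d"
  define zm where "zm = x + (- sg) *\<^sub>R d"
  have zpf: "zp \<in> frontier K" "zm \<in> frontier K" using zseg[OF sga(1)] zseg[OF sga(2)] uv(2)
    unfolding zp_def zm_def by auto
  have zpo: "birkhoff_orth K zp (p b)" "birkhoff_orth K zm (p b)"
    using seg_orth[OF zseg[OF sga(1)] uv(2)] seg_orth[OF zseg[OF sga(2)] uv(2)] bo_scale bc(3,4)
    unfolding zp_def zm_def d_def by metis+
  obtain tp where tp: "a - pi \<le> tp" "tp < a - pi + 2*pi" "p tp = zp" using p_surj[OF zpf(1)] by blast
  obtain tm where tm: "a - pi \<le> tm" "tm < a - pi + 2*pi" "p tm = zm" using p_surj[OF zpf(2)] by blast
  have "sin (b - a) > 0" using bc(1,2) by (intro sin_gt_zero) auto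
  then have dxb: "det2 (p a) (p b) > 0" using det_p_pos[of a b] by blast
  have dz: "det2 zp (p b) = det2 (p a) (p b)" "det2 zm (p b) = det2 (p a) (p b)"
    unfolding zp_def zm_def bc(4) a by (simp_all add: det2_def algebra_simps)
  have "det2 (p a) zp = sg * D" "det2 (p a) zm = - (sg * D)"
    unfolding zp_def zm_def a D_def by (simp_all add: det2_def algebra_simps)
  then have s1: "sin (tp - a) > 0" "sin (tm - a) < 0"
    using sgD det_p_pos[of a tp] det_p_neg[of a tm] tp tm by auto
  have s2: "sin (b - tp) > 0" "sin (b - tm) > 0"
    using dz dxb det_p_pos[of tp b] det_p_pos[of tm b] tp tm by auto
  have tp1: "a < tp" "tp < a + pi" using sinpos[of "tp - a"] s1 tp by auto
  have tp2: "tp < b" using sinpos[of "b - tp"] s2 tp1 bc by auto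
  have tm1: "a - pi < tm" "tm < a" using sinneg[of "tm - a"] s1 tm by auto
  have tm2: "b - tm < pi" using sinpos2[of "b - tm"] s2 tm1 bc by auto
  have m1: "measure M (A tm b) = pi/2" using mB[of tm b] tm1 tm2 bc zpo(2) tm by auto
  have m2: "measure M (A tp b) = pi/2" using mB[of tp b] tp1 tp2 bc zpo(1) tp by auto
  have "measure M (A tm b) = measure M (A tm tp) + measure M (A tp b)"
    using tm1 tm2 tp1 tp2 by (intro madd) auto
  then have "measure M (A tm tp) = 0" using m1 m2 by simp
  then have "p a \<notin> measure_support K M" using tm1 tp1 by (intro nbhd) auto
  then show False using sup a by simp
qed

lemma orth_ex: "\<exists>b. s < b \<and> b < s + pi \<and> birkhoff_orth K (p s) (p b)"
proof -
  define x where "x = p s"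
  have xK: "x \<in> K" using knorm_p knorm_K unfolding x_def by simp
  have ri: "rel_interior K = interior K" by (rule rel_interior_nonempty_interior[OF intne])
  have xni: "x \<notin> rel_interior K"
    unfolding x_def ri by (rule front_not_int[OF p_front])
  obtain a where a: "a \<noteq> 0" "\<And>y. y \<in> K \<Longrightarrow> a \<bullet> x \<le> a \<bullet> y"
      "\<And>y. y \<in> rel_interior K \<Longrightarrow> a \<bullet> x < a \<bullet> y"
    by (rule supporting_hyperplane_rel_boundary[OF cvx xK xni]) iprover
  define f where "f = - a"
  have f0: "f \<noteq> 0" using a(1) by (simp add: f_def)
  have fK: "f \<bullet> y \<le> f \<bullet> x" if "y \<in> K" for y using a(2)[OF that] by (simp add: f_def)
  have fx: "f \<bullet> x > 0"
  proof -
    define y0 where "y0 = (r0 / norm f) *\<^sub>R f"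
    have "norm y0 = r0" using f0 r0 by (simp add: y0_def)
    then have "y0 \<in> K" using r0 by auto
    moreover have "f \<bullet> y0 = r0 * norm f" using f0 by (simp add: y0_def dot_square_norm power2_eq_square)
    moreover have "r0 * norm f > 0" using f0 r0 by simp
    ultimately show ?thesis using fK by fastforce
  qed
  define d :: "real^2" where "d = (\<chi> i. if i = 1 then - (f$2) else f$1)"
  have dc: "d$1 = - (f$2)" "d$2 = f$1" by (simp_all add: d_def)
  have fd: "f \<bullet> d = 0" by (simp add: inner_vec_def sum_2 dc)
  have d0: "d \<noteq> 0"
  proof
    assume "d = 0"
    then have "f$1 = 0" "f$2 = 0" using dc by auto
    then have "f = 0" by (simp add: vec_eq_iff forall_2)
    then show False using f0 by simp
  qed
  have "1 \<le> knorm K (x + t *\<^sub>R d)" for t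
  proof (rule ccontr)
    assume lt: "\<not> 1 \<le> knorm K (x + t *\<^sub>R d)"
    show False
    proof (cases "x + t *\<^sub>R d = 0")
      case True
      then have "x = - (t *\<^sub>R d)" by (simp add: eq_neg_iff_add_eq_0)
      then have "f \<bullet> x = 0" using fd by simp
      then show False using fx by simp
    next
      case False
      define k where "k = knorm K (x + t *\<^sub>R d)"
      have k: "0 < k" "k < 1" using knorm_pos[OF False] lt by (auto simp: k_def)
      define w where "w = (1/k) *\<^sub>R (x + t *\<^sub>R d)"
      have "knorm K w = 1" using k unfolding w_def k_def by (simp add: knorm_scale)
      then have "w \<in> K" using knorm_K by simp
      moreover have "f \<bullet> w = (f \<bullet> x) / k" using fd by (simp add: w_def inner_add_right)
      moreover have "(f \<bullet> x) / k > f \<bullet> x" using k fx by (simp add: less_divide_eq)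
      ultimately show False using fK by fastforce
    qed
  qed
  then have "birkhoff_orth K (p s) d" using bo_p d0 unfolding x_def by simp
  then obtain b c where bc: "s < b" "b < s + pi" "c \<noteq> 0" "p b = c *\<^sub>R d" using orth_dir by blast
  then have "birkhoff_orth K (p s) (p b)" using bo_scale \<open>birkhoff_orth K (p s) d\<close> by simp
  then show ?thesis using bc by blast
qed

definition chain :: "real \<Rightarrow> real \<Rightarrow> bool" where
  "chain s c \<longleftrightarrow> (\<exists>b. s < b \<and> b < s + pi \<and> b < c \<and> c < b + pi \<and>
      birkhoff_orth K (p s) (p b) \<and> birkhoff_orth K (p b) (p c))"

lemma chain_ex: "\<exists>c. chain s c"
  using orth_ex[of s] orth_ex unfolding chain_def by meson

lemma chain_meas1: assumes "chain s c" "s + pi < c" shows "measure M (A (s + pi) c) = 0"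
proof -
  obtain b where b: "s < b" "b < s + pi" "b < c" "c < b + pi"
      "birkhoff_orth K (p s) (p b)" "birkhoff_orth K (p b) (p c)"
    using assms(1) unfolding chain_def by blast
  have "measure M (A s c) = measure M (A s b) + measure M (A b c)" using b by (intro madd) auto
  also have "\<dots> = pi" using mB[of s b] mB[of b c] b by simp
  finally have "measure M (A s c) = pi" .
  moreover have "measure M (A s c) = measure M (A s (s + pi)) + measure M (A (s + pi) c)"
    using b assms by (intro madd) auto
  ultimately show ?thesis using mhalf by simp
qed

lemma chain_meas2: assumes "chain s c" "c < s + pi" shows "measure M (A c (s + pi)) = 0"
proof -
  obtain b where b: "s < b" "b < s + pi" "b < c" "c < b + pi"
      "birkhoff_orth K (p s) (p b)" "birkhoff_orth K (p b) (p c)"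
    using assms(1) unfolding chain_def by blast
  have "measure M (A s c) = measure M (A s b) + measure M (A b c)" using b by (intro madd) auto
  also have "\<dots> = pi" using mB[of s b] mB[of b c] b by simp
  finally have "measure M (A s c) = pi" .
  moreover have "measure M (A s (s + pi)) = measure M (A s c) + measure M (A c (s + pi))"
    using b assms by (intro madd) auto
  ultimately show ?thesis using mhalf by simp
qed

lemma chain_auer: assumes "chain a (a + pi)" shows "p a \<in> auerbach_points K"
proof -
  obtain b where b: "birkhoff_orth K (p a) (p b)" "birkhoff_orth K (p b) (p (a + pi))"
    using assms unfolding chain_def by blast
  have "birkhoff_orth K (p b) ((-1) *\<^sub>R p (a + pi))" using bo_scale[OF b(2), of "-1"] by simp
  then have "birkhoff_orth K (p b) (p a)" using p_pi by simp
  then show ?thesis unfolding auerbach_points_def using b(1) p_front by blast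
qed

lemma strict_orth: assumes "\<forall>t. 1 \<le> knorm K (p s + t *\<^sub>R p b)" "s \<le> b" "b \<le> s + pi"
  shows "s < b" "b < s + pi"
proof -
  show "s < b"
  proof (rule ccontr)
    assume "\<not> s < b" then have "b = s" using assms by simp
    then show False using assms(1) spec[OF assms(1), of "-1"] by simp
  qed
  show "b < s + pi"
  proof (rule ccontr)
    assume "\<not> b < s + pi" then have "b = s + pi" using assms by simp
    then show False using assms(1) spec[OF assms(1), of "1"] p_pi by simp
  qed
qed

lemma chain_limit:
  assumes F: "closed F" and sg: "\<bar>sg\<bar> = 1"
    and h: "\<And>ep. 0 < ep \<Longrightarrow> ep < 1 \<Longrightarrow> \<exists>c. chain (a + sg * ep) c \<and> c \<in> F"
  shows "\<exists>c. chain a c \<and> c \<in> F"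
proof -
  define P1 :: "real \<times> real \<times> real \<Rightarrow> bool" where
    "P1 z \<longleftrightarrow> a - 1 \<le> fst z \<and> fst z \<le> a + 1 \<and> fst z \<le> fst (snd z) \<and> fst (snd z) \<le> fst z + pi \<and>
      fst (snd z) \<le> snd (snd z) \<and> snd (snd z) \<le> fst (snd z) + pi" for z
  define P2 :: "real \<times> real \<times> real \<Rightarrow> bool" where
    "P2 z \<longleftrightarrow> (\<forall>t. 1 \<le> knorm K (p (fst z) + t *\<^sub>R p (fst (snd z)))) \<and>
      (\<forall>t. 1 \<le> knorm K (p (fst (snd z)) + t *\<^sub>R p (snd (snd z))))" for z
  define Q where "Q = {z. P1 z \<and> P2 z \<and> snd (snd z) \<in> F}"
  have c1: "closed {z. P1 z}" unfolding P1_def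
    by (intro closed_Collect_conj closed_Collect_le continuous_intros)
  have c2: "closed {z. P2 z}" unfolding P2_def
    by (intro closed_Collect_conj closed_Collect_all closed_Collect_le continuous_intros)
  have c3: "closed {z::real \<times> real \<times> real. snd (snd z) \<in> F}"
    using closed_vimage[OF F, of "\<lambda>z::real \<times> real \<times> real. snd (snd z)"]
    by (simp add: vimage_def continuous_intros)
  have cQ: "closed Q" unfolding Q_def using c1 c2 c3 by (intro closed_Collect_conj) auto
  define Box :: "(real \<times> real \<times> real) set" where
    "Box = {a - 1..a + 1} \<times> {a - 1..a + 1 + pi} \<times> {a - 1..a + 1 + 2*pi}"
  have cB: "compact Box" unfolding Box_def by (intro compact_Times compact_Icc)
  have QB: "Q \<subseteq> Box" unfolding Q_def Box_def P1_def by auto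
  have "compact (Box \<inter> Q)" using cB cQ by (rule compact_Int_closed)
  then have "compact Q" using QB by (simp add: Int_absorb1)
  then have "compact (fst ` Q)" by (intro compact_continuous_image continuous_intros)
  then have cl: "closed (fst ` Q)" by (rule compact_imp_closed)
  have "a \<in> closure (fst ` Q)"
    unfolding closure_approachable
  proof (intro allI impI)
    fix e :: real assume e: "e > 0"
    define ep where "ep = min (e/2) (1/2)"
    have ep: "0 < ep" "ep < 1" "ep < e" using e by (auto simp: ep_def)
    obtain c where c: "chain (a + sg * ep) c" "c \<in> F" using h[OF ep(1,2)] by blast
    then obtain b where b: "a + sg * ep < b" "b < a + sg * ep + pi" "b < c" "c < b + pi"
        "birkhoff_orth K (p (a + sg * ep)) (p b)" "birkhoff_orth K (p b) (p c)"
      unfolding chain_def by blast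
    have sge: "\<bar>sg * ep\<bar> = ep" using sg ep by (simp add: abs_mult)
    have "(a + sg * ep, b, c) \<in> Q"
      unfolding Q_def P1_def P2_def using b c sge ep bo_p by auto
    moreover have "dist (a + sg * ep) a < e" using sge ep by (simp add: dist_real_def)
    ultimately show "\<exists>y\<in>fst ` Q. dist y a < e" by force
  qed
  then have "a \<in> fst ` Q" using cl by (simp add: closure_closed)
  then obtain b c where q: "(a, b, c) \<in> Q" by force
  then have q1: "a \<le> b" "b \<le> a + pi" "b \<le> c" "c \<le> b + pi" "c \<in> F"
    and q2: "\<forall>t. 1 \<le> knorm K (p a + t *\<^sub>R p b)" "\<forall>t. 1 \<le> knorm K (p b + t *\<^sub>R p c)"
    unfolding Q_def P1_def P2_def by auto
  have "chain a c" unfolding chain_def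
    using strict_orth[OF q2(1) q1(1,2)] strict_orth[OF q2(2) q1(3,4)] q2 bo_p p_ne by blast
  then show ?thesis using q1 by blast
qed

lemma auer: assumes sup: "x \<in> measure_support K M" shows "x \<in> auerbach_points K"
proof (rule ccontr)
  assume na: "x \<notin> auerbach_points K"
  have xf: "x \<in> frontier K" using sup unfolding measure_support_def by auto
  then obtain a where a: "p a = x" using p_surj[of x 0] by blast
  have neq: "c \<noteq> a + pi" if "chain a c" for c using chain_auer that na a by blast
  consider (both) c1 c2 where "chain a c1" "a + pi < c1" "chain a c2" "c2 < a + pi"
    | (gt) "\<And>c. chain a c \<Longrightarrow> a + pi < c"
    | (lt) "\<And>c. chain a c \<Longrightarrow> c < a + pi"
    using neq by (meson linorder_neqE_linordered_idom)
  then show False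
  proof cases
    case both
    have b1: "c1 < a + 2*pi" "a < c2" using both unfolding chain_def by auto
    have "measure M (A c2 c1) = measure M (A c2 (a + pi)) + measure M (A (a + pi) c1)"
      using both b1 by (intro madd) auto
    then have "measure M (A c2 c1) = 0" using chain_meas1[OF both(1,2)] chain_meas2[OF both(3,4)] by simp
    then have "measure M (A (c2 - pi) (c1 - pi)) = 0" using mshift[of "c2 - pi" "c1 - pi"] by simp
    then have "p a \<notin> measure_support K M" using both b1 by (intro nbhd) auto
    then show False using sup a by simp
  next
    case gt
    have "\<exists>ep. 0 < ep \<and> ep < 1 \<and> (\<exists>c. chain (a - ep) c \<and> a + pi < c)"
    proof (rule ccontr)
      assume nn: "\<not> ?thesis"
      have "\<exists>c. chain (a + (-1) * ep) c \<and> c \<in> {..a + pi}" if "0 < ep" "ep < 1" for ep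
        using nn that chain_ex[of "a - ep"] by force
      then obtain c where "chain a c" "c \<in> {..a + pi}" using chain_limit[of "{..a + pi}" "-1" a] by auto
      then show False using gt by fastforce
    qed
    then obtain ep c where ec: "0 < ep" "ep < 1" "chain (a - ep) c" "a + pi < c" by blast
    have c2: "c < a - ep + 2*pi" using ec unfolding chain_def by auto
    have "measure M (A (a - ep + pi) c) = 0" using chain_meas1[OF ec(3)] ec by simp
    then have "measure M (A (a - ep) (c - pi)) = 0" using mshift[of "a - ep" "c - pi"] by simp
    then have "p a \<notin> measure_support K M" using ec c2 by (intro nbhd) auto
    then show False using sup a by simp
  next
    case lt
    have "\<exists>ep. 0 < ep \<and> ep < 1 \<and> (\<exists>c. chain (a + ep) c \<and> c < a + pi)"
    proof (rule ccontr)
      assume nn: "\<not> ?thesis"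
      have "\<exists>c. chain (a + 1 * ep) c \<and> c \<in> {a + pi..}" if "0 < ep" "ep < 1" for ep
        using nn that chain_ex[of "a + ep"] by force
      then obtain c where "chain a c" "c \<in> {a + pi..}" using chain_limit[of "{a + pi..}" 1 a] by auto
      then show False using lt by fastforce
    qed
    then obtain ep c where ec: "0 < ep" "ep < 1" "chain (a + ep) c" "c < a + pi" by blast
    have c2: "a + ep < c" using ec unfolding chain_def by auto
    have "measure M (A c (a + ep + pi)) = 0" using chain_meas2[OF ec(3)] ec by simp
    then have "measure M (A (c - pi) (a + ep)) = 0" using mshift[of "c - pi" "a + ep"] by simp
    then have "p a \<notin> measure_support K M" using ec c2 by (intro nbhd) auto
    then show False using sup a by simp
  qed
qed

lemma main: "measure_support K M \<subseteq> auerbach_points K - E_set K"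
  using auer not_E by blast

end

theorem lemma2p1:
  fixes K :: "(real^2) set" and M :: "(real^2) measure"
  assumes "convex_body K" and "origin_symmetric K" and "B_measure K M"
  shows "measure_support K M \<subseteq> auerbach_points K - E_set K"
proof -
  interpret bm K M using assms by unfold_locales
  show ?thesis by (rule main)
qed

end
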